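(* Let $a<b$ and let $\phi:[a,b]^n\to\mathbb{R}$ be permutation-invariant, such that its convex envelope over $[a,b]^n$ coincides with the convex envelope over $[a,b]^n$ of its restriction to $\{a,b\}^n$ (the function equal to $\phi$ on $\{a,b\}^n$ and $+\infty$ elsewhere). For $i=1,\dots,n$ and $j=0,\dots,n$, let $p_{ij}=a$ if $i>j$ and $p_{ij}=b$ otherwise, and let $p_{\cdot j}\in\mathbb{R}^n$ be the $j$-th column. Define $f(x)=\phi(p_{\cdot0})+\sum_{i=1}^n\frac{x_i-a}{b-a}\big(\phi(p_{\cdot i})-\phi(p_{\cdot i-1})\big)$. Then for every $x\in[a,b]^n$, $$\mathrm{conv}_{[a,b]^n}(\phi)(x)=\min\{f(u)\mid u\ge_m x,\ b\ge u_1\ge\dots\ge u_n\ge a\}.$$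
   Context: $\mathrm{conv}_C(\phi)$ denotes the convex envelope (largest convex underestimator) of $\phi$ over $C$. $\phi$ is permutation-invariant if $\phi(Qx)=\phi(x)$ for all permutation matrices $Q$. $u\ge_m x$ means $\sum_{i=1}^j u_{[i]}\ge\sum_{i=1}^j x_{[i]}$ for $j<n$ with equality for $j=n$ ($v_{[i]}$ the $i$-th largest entry). *)

theory Defs
  imports "HOL-Analysis.Analysis" "HOL-Library.Extended_Real"
begin

text \<open>Vectors in R^n are modelled as real^'n, where the index type 'n is a finite
  linearly ordered type; its order plays the role of the index order 1 < 2 < ... < n.\<close>

definition box_ab :: "real \<Rightarrow> real \<Rightarrow> (real^'n) set" where
  "box_ab a b = {x. \<forall>i. a \<le> x $ i \<and> x $ i \<le> b}"

definition vert_ab :: "real \<Rightarrow> real \<Rightarrow> (real^'n) set" where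
  "vert_ab a b = {x. \<forall>i. x $ i = a \<or> x $ i = b}"

definition conv_env :: "'a::real_vector set \<Rightarrow> ('a \<Rightarrow> ereal) \<Rightarrow> 'a \<Rightarrow> ereal" where
  "conv_env C psi x = (SUP g \<in> {g. convex_on C g \<and> (\<forall>y\<in>C. ereal (g y) \<le> psi y)}. ereal (g x))"

definition perm_invariant_on :: "(real^'n) set \<Rightarrow> (real^'n \<Rightarrow> real) \<Rightarrow> bool" where
  "perm_invariant_on C phi \<longleftrightarrow>
     (\<forall>\<sigma> x. \<sigma> permutes (UNIV :: 'n set) \<longrightarrow> x \<in> C \<longrightarrow> phi (\<chi> i. x $ \<sigma> i) = phi x)"

text \<open>Position (1-based) of an index in the order of 'n.\<close>
definition rank :: "'n::{finite,linorder} \<Rightarrow> nat" where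
  "rank i = card {k. k < i} + 1"

definition dsorted :: "real^'n::{finite,linorder} \<Rightarrow> real list" where
  "dsorted x = rev (sort (map (\<lambda>i. x $ i) (sorted_list_of_set (UNIV :: 'n set))))"

definition majorizes :: "real^'n::{finite,linorder} \<Rightarrow> real^'n::{finite,linorder} \<Rightarrow> bool" where
  "majorizes u x \<longleftrightarrow>
     (\<forall>j. 1 \<le> j \<and> j < length (dsorted x) \<longrightarrow> sum_list (take j (dsorted x)) \<le> sum_list (take j (dsorted u)))
     \<and> sum_list (dsorted u) = sum_list (dsorted x)"

definition pcol :: "real \<Rightarrow> real \<Rightarrow> nat \<Rightarrow> real^'n::{finite,linorder}" where
  "pcol a b j = (\<chi> i. if rank i > j then a else b)"

definition fpw :: "real \<Rightarrow> real \<Rightarrow> (real^'n::{finite,linorder} \<Rightarrow> real) \<Rightarrow> real^'n::{finite,linorder} \<Rightarrow> real" where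
  "fpw a b phi x = phi (pcol a b 0) +
     (\<Sum>i\<in>UNIV. (x $ i - a) / (b - a) * (phi (pcol a b (rank i)) - phi (pcol a b (rank i - 1))))"

end

theory Submission
  imports Defs
begin


definition eidx :: "nat \<Rightarrow> 'n::{finite,linorder}" where
  "eidx k = sorted_list_of_set (UNIV::'n set) ! k"

lemma len_idx: "length (sorted_list_of_set (UNIV::'n::{finite,linorder} set)) = CARD('n)"
  by simp

lemma bij_eidx: "bij_betw (eidx::nat\<Rightarrow>'n::{finite,linorder}) {..<CARD('n)} UNIV"
  unfolding eidx_def[abs_def] by (rule bij_betw_nth) auto

lemma eidx_less: "k < m \<Longrightarrow> m < CARD('n) \<Longrightarrow> (eidx k::'n::{finite,linorder}) < eidx m"
  unfolding eidx_def
  by (metis len_idx sorted_list_of_set.strict_sorted_key_list_of_set sorted_wrt_nth_less finite_class.finite_UNIV)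

lemma eidx_le_iff: "k < CARD('n) \<Longrightarrow> m < CARD('n) \<Longrightarrow> ((eidx k::'n::{finite,linorder}) \<le> eidx m) = (k \<le> m)"
  by (metis eidx_less le_less not_le order_less_asym)

lemma eidx_surj: "\<exists>k<CARD('n). i = (eidx k::'n::{finite,linorder})"
  using bij_eidx[where 'n='n] unfolding bij_betw_def by auto

lemma rank_eidx: assumes "k < CARD('n)" shows "rank (eidx k::'n::{finite,linorder}) = Suc k"
proof -
  have "{j. j < (eidx k::'n)} = eidx ` {..<k}"
  proof safe
    fix j :: 'n assume "j < eidx k"
    obtain m where m: "m < CARD('n)" "j = eidx m" using eidx_surj by blast
    then have "m < k" using \<open>j < eidx k\<close> assms by (metis eidx_le_iff not_le leD)
    then show "j \<in> eidx ` {..<k}" using m by auto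
  next
    fix m assume "m < k" then show "eidx m < (eidx k::'n)" using assms eidx_less by blast
  qed
  moreover have "inj_on (eidx::nat\<Rightarrow>'n) {..<k}"
    using bij_eidx[where 'n='n] assms unfolding bij_betw_def
    by (meson inj_on_subset lessThan_subset_iff less_imp_le)
  ultimately show ?thesis unfolding rank_def by (simp add: card_image)
qed

lemma dsorted_len: "length (dsorted (y::real^'n::{finite,linorder})) = CARD('n)"
  by (simp add: dsorted_def)

lemma dsorted_mono: "p \<le> q \<Longrightarrow> q < CARD('n) \<Longrightarrow> dsorted (y::real^'n::{finite,linorder}) ! q \<le> dsorted y ! p"
proof -
  assume a: "p \<le> q" "q < CARD('n)"
  have "sorted (rev (dsorted y))" by (simp add: dsorted_def)
  then show ?thesis using a dsorted_len sorted_rev_nth_mono by metis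
qed

lemma map_idx: "map (\<lambda>i. (y::real^'n::{finite,linorder}) $ i) (sorted_list_of_set UNIV) = map (\<lambda>k. y $ eidx k) [0..<CARD('n)]"
proof -
  have "sorted_list_of_set (UNIV::'n set) = map (\<lambda>k. eidx k) [0..<CARD('n)]"
    unfolding eidx_def by (metis len_idx map_nth)
  then show ?thesis by simp
qed

lemma dsorted_mset: "mset (dsorted (y::real^'n::{finite,linorder})) = mset (map (\<lambda>k. y $ eidx k) [0..<CARD('n)])"
  unfolding dsorted_def map_idx by simp

lemma dsorted_rep: fixes y :: "real^'n::{finite,linorder}"
  shows "\<exists>\<pi>. bij_betw \<pi> {..<CARD('n)} (UNIV::'n set) \<and> (\<forall>k<CARD('n). dsorted y ! k = y $ \<pi> k)"
proof -
  obtain p where p: "p permutes {..<length (map (\<lambda>k. y $ eidx k) [0..<CARD('n)])}"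
     "permute_list p (map (\<lambda>k. y $ eidx k) [0..<CARD('n)]) = dsorted y"
    using mset_eq_permutation[OF dsorted_mset] by blast
  have pl: "p permutes {..<CARD('n)}" using p(1) by simp
  have "\<forall>k<CARD('n). dsorted y ! k = y $ eidx (p k)"
  proof (intro allI impI)
    fix k assume k: "k < CARD('n)"
    have pk: "p k < CARD('n)" by (metis lessThan_iff permutes_in_image pl k)
    have "dsorted y ! k = permute_list p (map (\<lambda>k. y $ eidx k) [0..<CARD('n)]) ! k" using p(2) by simp
    also have "\<dots> = y $ eidx (p k)" using k pk p(1) by (simp add: permute_list_nth)
    finally show "dsorted y ! k = y $ eidx (p k)" .
  qed
  moreover have "bij_betw (eidx \<circ> p) {..<CARD('n)} (UNIV::'n set)"
    using bij_betw_trans[OF permutes_imp_bij[OF pl] bij_eidx] .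
  ultimately show ?thesis by (metis comp_apply)
qed

definition sortedv :: "real^'n::{finite,linorder} \<Rightarrow> bool" where
  "sortedv u \<longleftrightarrow> (\<forall>i k. i \<le> k \<longrightarrow> u $ k \<le> u $ i)"

lemma dsorted_sortedv: assumes "sortedv (u::real^'n::{finite,linorder})"
  shows "dsorted u = map (\<lambda>k. u $ eidx k) [0..<CARD('n)]"
proof -
  let ?L = "map (\<lambda>k. u $ eidx k) [0..<CARD('n)]"
  have "sorted (rev ?L)"
    unfolding sorted_rev_iff_nth_mono using assms unfolding sortedv_def
    by (auto simp: eidx_le_iff)
  then have "sort ?L = rev ?L" by (intro properties_for_sort) auto
  then show ?thesis unfolding dsorted_def map_idx by simp
qed

definition Tj :: "real^'n::{finite,linorder} \<Rightarrow> nat \<Rightarrow> real" where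
  "Tj y j = sum_list (take j (dsorted y))"

lemma sum_list_take_nth: "j \<le> length L \<Longrightarrow> sum_list (take j L) = (\<Sum>k<j. L ! k)"
  by (simp add: sum_list_sum_nth atLeast0LessThan min_def)

lemma Tj_rep: assumes "\<forall>k<CARD('n). dsorted (y::real^'n::{finite,linorder}) ! k = y $ \<pi> k" "j \<le> CARD('n)"
  shows "Tj y j = (\<Sum>k<j. y $ \<pi> k)"
  unfolding Tj_def using assms by (simp add: sum_list_take_nth dsorted_len)

lemma Tj_sortedv: assumes "sortedv (u::real^'n::{finite,linorder})" "j \<le> CARD('n)"
  shows "Tj u j = (\<Sum>k<j. u $ eidx k)"
  unfolding Tj_def using assms by (simp add: sum_list_take_nth dsorted_len dsorted_sortedv)

lemma Tj_total: "Tj (y::real^'n::{finite,linorder}) CARD('n) = (\<Sum>i\<in>UNIV. y $ i)"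
proof -
  obtain \<pi> where p: "bij_betw \<pi> {..<CARD('n)} (UNIV::'n set)" "\<forall>k<CARD('n). dsorted y ! k = y $ \<pi> k"
    using dsorted_rep by blast
  have "Tj y CARD('n) = (\<Sum>k<CARD('n). y $ \<pi> k)" using Tj_rep[OF p(2)] by simp
  also have "\<dots> = (\<Sum>i\<in>UNIV. y $ i)" using sum.reindex_bij_betw[OF p(1), of "\<lambda>i. y $ i"] by simp
  finally show ?thesis .
qed

lemma nat_K: fixes d :: "nat \<Rightarrow> real"
  assumes mono: "\<And>p q. p \<le> q \<Longrightarrow> q < N \<Longrightarrow> d q \<le> d p" and S: "S \<subseteq> {..<N}" "card S = j"
  shows "sum d S \<le> sum d {..<j}"
proof (cases "j = 0")
  case True then show ?thesis using S finite_subset by fastforce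
next
  case False
  have fS: "finite S" using S finite_subset by blast
  have jN: "j \<le> N" using S by (metis card_lessThan card_mono finite_lessThan)
  let ?t = "d (j - 1)"
  let ?A = "{..<j}"
  have c: "card (S - ?A) = card (?A - S)"
  proof -
    have "card (S - ?A) = card S - card (S \<inter> ?A)" by (metis card_Diff_subset_Int fS finite_Int)
    moreover have "card (?A - S) = card ?A - card (?A \<inter> S)" by (simp add: card_Diff_subset_Int)
    ultimately show ?thesis using S by (simp add: Int_commute)
  qed
  have h1: "sum d (S - ?A) \<le> sum (\<lambda>_. ?t) (S - ?A)"
    by (rule sum_mono) (use S False mono in auto)
  have h2: "sum (\<lambda>_. ?t) (?A - S) \<le> sum d (?A - S)"
    by (rule sum_mono) (use False jN mono in auto)
  have h3: "sum d S = sum d (S \<inter> ?A) + sum d (S - ?A)" by (metis fS sum.Int_Diff)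
  have h4: "sum d ?A = sum d (S \<inter> ?A) + sum d (?A - S)" by (metis finite_lessThan sum.Int_Diff Int_commute)
  have h5: "sum (\<lambda>_. ?t) (S - ?A) = sum (\<lambda>_. ?t) (?A - S)" by (simp only: sum_constant c)
  show ?thesis using h1 h2 h3 h4 h5 by linarith
qed

lemma Tj_K: fixes y :: "real^'n::{finite,linorder}"
  assumes "card (S::'n set) = j"
  shows "(\<Sum>i\<in>S. y $ i) \<le> Tj y j"
proof -
  obtain \<pi> where p: "bij_betw \<pi> {..<CARD('n)} (UNIV::'n set)" "\<forall>k<CARD('n). dsorted y ! k = y $ \<pi> k"
    using dsorted_rep by blast
  define S' where "S' = inv_into {..<CARD('n)} \<pi> ` S"
  have im: "\<pi> ` {..<CARD('n)} = UNIV" using p(1) by (simp add: bij_betw_def)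
  have inj: "inj_on \<pi> {..<CARD('n)}" using p(1) by (simp add: bij_betw_def)
  have S'sub: "S' \<subseteq> {..<CARD('n)}"
  proof
    fix k assume "k \<in> S'"
    then obtain i where "k = inv_into {..<CARD('n)} \<pi> i" unfolding S'_def by blast
    then show "k \<in> {..<CARD('n)}" using inv_into_into[of i \<pi> "{..<CARD('n)}"] im by simp
  qed
  have imS: "\<pi> ` S' = S" unfolding S'_def apply (rule image_inv_into_cancel) apply (simp only: im) apply (rule subset_UNIV) done
  have injS: "inj_on \<pi> S'" using inj S'sub inj_on_subset by blast
  have cS': "card S' = j" using card_image[OF injS] imS assms by simp
  have "card S \<le> CARD('n)" by (rule card_mono) auto
  then have jN: "j \<le> CARD('n)" using assms by simp
  have "(\<Sum>i\<in>S. y $ i) = (\<Sum>k\<in>S'. y $ \<pi> k)"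
    using sum.reindex[OF injS, of "\<lambda>i. y $ i"] imS by simp
  also have "\<dots> \<le> (\<Sum>k<j. y $ \<pi> k)"
  proof (rule nat_K[OF _ S'sub cS'])
    fix p q assume "p \<le> q" "q < CARD('n)"
    then show "y $ \<pi> q \<le> y $ \<pi> p" using p(2) dsorted_mono[of p q y] by simp
  qed
  also have "\<dots> = Tj y j" using Tj_rep[OF p(2) jN] by simp
  finally show ?thesis .
qed

lemma majorizes_iff: "majorizes (u::real^'n::{finite,linorder}) x \<longleftrightarrow>
   (\<forall>j. 1 \<le> j \<and> j < CARD('n) \<longrightarrow> Tj x j \<le> Tj u j) \<and> Tj u CARD('n) = Tj x CARD('n)"
  unfolding majorizes_def Tj_def dsorted_len by (simp add: take_all dsorted_len)



lemma card_pos: "0 < CARD('n::finite)" by simp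

lemma box_cbox: "box_ab a b = cbox (vec a) (vec b :: real^'n)"
  unfolding box_ab_def by (auto simp: mem_box_cart)

lemma pcol_eidx: "m < CARD('n) \<Longrightarrow> (pcol a b k :: real^'n::{finite,linorder}) $ eidx m = (if k \<le> m then a else b)"
  unfolding pcol_def by (simp add: rank_eidx)

lemma fpw_reindex:
  "fpw a b phi (u::real^'n::{finite,linorder}) = phi (pcol a b 0) +
     (\<Sum>m<CARD('n). (u $ eidx m - a) / (b - a) * (phi (pcol a b (Suc m)) - phi (pcol a b m)))"
proof -
  have "(\<Sum>i\<in>UNIV. (u $ i - a) / (b - a) * (phi (pcol a b (rank i)) - phi (pcol a b (rank i - 1))))
      = (\<Sum>m<CARD('n). (u $ eidx m - a) / (b - a) * (phi (pcol a b (rank (eidx m::'n))) - phi (pcol a b (rank (eidx m::'n) - 1))))"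
    by (subst sum.reindex_bij_betw[OF bij_eidx, symmetric]) (rule refl)
  also have "\<dots> = (\<Sum>m<CARD('n). (u $ eidx m - a) / (b - a) * (phi (pcol a b (Suc m)) - phi (pcol a b m)))"
    by (rule sum.cong) (auto simp: rank_eidx)
  finally show ?thesis unfolding fpw_def by simp
qed

lemma fpw_affine: fixes u v :: "real^'n::{finite,linorder}"
  shows "fpw a b phi ((1 - t) *\<^sub>R u + t *\<^sub>R v) = (1 - t) * fpw a b phi u + t * fpw a b phi v"
proof -
  define K where "K i = (phi (pcol a b (rank i)) - phi (pcol a b (rank i - 1))) / (b - a)" for i :: 'n
  have f: "fpw a b phi w = phi (pcol a b 0) + (\<Sum>i\<in>UNIV. (w $ i - a) * K i)" for w :: "(real, 'n) vec"
    unfolding fpw_def K_def by (simp add: field_simps)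
  have "(\<Sum>i\<in>UNIV. (((1 - t) *\<^sub>R u + t *\<^sub>R v) $ i - a) * K i)
     = (\<Sum>i\<in>UNIV. (1 - t) * ((u $ i - a) * K i) + t * ((v $ i - a) * K i))"
    by (rule sum.cong) (auto simp: algebra_simps)
  also have "\<dots> = (1 - t) * (\<Sum>i\<in>UNIV. (u $ i - a) * K i) + t * (\<Sum>i\<in>UNIV. (v $ i - a) * K i)"
    by (simp add: sum.distrib sum_distrib_left)
  finally show ?thesis unfolding f by (simp add: algebra_simps)
qed

lemma abel_id: fixes tt c :: "nat \<Rightarrow> real"
  shows "(\<Sum>k\<le>N. (tt k - tt (Suc k)) * c k) = tt 0 * c 0 + (\<Sum>m<N. tt (Suc m) * (c (Suc m) - c m)) - tt (Suc N) * c N"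
  by (induction N) (auto simp: algebra_simps)

definition ttv :: "real \<Rightarrow> real \<Rightarrow> real^'n::{finite,linorder} \<Rightarrow> nat \<Rightarrow> real" where
  "ttv a b u m = (if m = 0 then 1 else if m \<le> CARD('n) then (u $ eidx (m - 1) - a) / (b - a) else 0)"

definition muv :: "real \<Rightarrow> real \<Rightarrow> real^'n::{finite,linorder} \<Rightarrow> nat \<Rightarrow> real" where
  "muv a b u k = ttv a b u k - ttv a b u (Suc k)"

lemma muv_nonneg:
  assumes ab: "a < b" and s: "sortedv (u::real^'n::{finite,linorder})" and bx: "u \<in> box_ab a b" and k: "k \<le> CARD('n)"
  shows "0 \<le> muv a b u k"
proof -
  have ub: "a \<le> u $ i \<and> u $ i \<le> b" for i using bx unfolding box_ab_def by auto
  consider "k = 0" | "0 < k" "k < CARD('n)" | "k = CARD('n)" "0 < k" using k by linarith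
  then show ?thesis
  proof cases
    case 1
    have "u $ eidx 0 \<le> b" using ub by blast
    then show ?thesis using 1 ab card_pos[where 'n='n] by (simp add: muv_def ttv_def field_simps)
  next
    case 2
    have "eidx (k - 1) \<le> (eidx k :: 'n)" using 2 by (simp add: eidx_le_iff)
    then have "u $ eidx k \<le> u $ eidx (k - 1)" using s unfolding sortedv_def by blast
    then show ?thesis using 2 ab by (simp add: muv_def ttv_def divide_right_mono Suc_le_eq)
  next
    case 3
    then show ?thesis using ub[of "eidx (k - 1)"] ab by (simp add: muv_def ttv_def)
  qed
qed

lemma muv_sum: "(\<Sum>k\<le>CARD('n). muv a b (u::real^'n::{finite,linorder}) k) = 1"
  unfolding muv_def sum_telescope by (simp add: ttv_def)

lemma muv_decomp:
  assumes ab: "a < b"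
  shows "u = (\<Sum>k\<le>CARD('n). muv a b (u::real^'n::{finite,linorder}) k *\<^sub>R pcol a b k)"
proof (subst vec_eq_iff, intro allI)
  fix i :: 'n
  obtain m where m: "m < CARD('n)" "i = eidx m" using eidx_surj by blast
  have "(\<Sum>k\<le>CARD('n). muv a b u k *\<^sub>R pcol a b k) $ i = (\<Sum>k\<le>CARD('n). muv a b u k * (if k \<le> m then a else b))"
    using m by (simp add: pcol_eidx)
  also have "\<dots> = (\<Sum>k\<le>CARD('n). muv a b u k * b) - (b - a) * (\<Sum>k\<le>CARD('n). if k \<in> {..m} then muv a b u k else 0)"
    by (simp add: sum_distrib_left sum_subtractf[symmetric] algebra_simps, rule sum.cong, auto simp: algebra_simps)
  also have "(\<Sum>k\<le>CARD('n). if k \<in> {..m} then muv a b u k else 0) = (\<Sum>k\<le>m. muv a b u k)"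
  proof -
    have "{..CARD('n)} \<inter> {..m} = {..m}" using m by auto
    then show ?thesis by (simp only: sum.inter_restrict[OF finite_atMost, symmetric])
  qed
  also have "(\<Sum>k\<le>m. muv a b u k) = 1 - ttv a b u (Suc m)"
    unfolding muv_def sum_telescope by (simp add: ttv_def)
  also have "(\<Sum>k\<le>CARD('n). muv a b u k * b) = b" using muv_sum[of a b u]
    by (simp add: sum_distrib_right[symmetric])
  finally have eq: "(\<Sum>k\<le>CARD('n). muv a b u k *\<^sub>R pcol a b k) $ i = b - (b - a) * (1 - ttv a b u (Suc m))" .
  have tt: "ttv a b u (Suc m) = (u $ eidx m - a) / (b - a)" using m by (simp add: ttv_def)
  have "b - (b - a) * (1 - ttv a b u (Suc m)) = u $ i" using tt m ab by (simp add: field_simps)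
  then show "u $ i = (\<Sum>k\<le>CARD('n). muv a b u k *\<^sub>R pcol a b k) $ i" using eq by simp
qed

lemma muv_fpw:
  assumes ab: "a < b"
  shows "fpw a b phi (u::real^'n::{finite,linorder}) = (\<Sum>k\<le>CARD('n). muv a b u k * phi (pcol a b k))"
proof -
  have "(\<Sum>k\<le>CARD('n). muv a b u k * phi (pcol a b k)) =
     ttv a b u 0 * phi (pcol a b 0) + (\<Sum>m<CARD('n). ttv a b u (Suc m) * (phi (pcol a b (Suc m)) - phi (pcol a b m)))
       - ttv a b u (Suc CARD('n)) * phi (pcol a b CARD('n))"
    unfolding muv_def by (rule abel_id)
  also have "\<dots> = fpw a b phi u"
    unfolding fpw_reindex by (auto simp: ttv_def Suc_le_eq intro!: sum.cong)
  finally show ?thesis by simp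
qed



lemma abel_id2: fixes a d :: "nat \<Rightarrow> real"
  shows "(\<Sum>k<N. a k * d k) = (\<Sum>k<N. (a k - a (Suc k)) * (\<Sum>j<Suc k. d j)) + a N * (\<Sum>j<N. d j)"
  by (induction N) (auto simp: algebra_simps)

lemma abel_nonneg: fixes a d :: "nat \<Rightarrow> real"
  assumes mono: "\<And>k. Suc k < N \<Longrightarrow> a (Suc k) \<le> a k"
    and D: "\<And>k. Suc k < N \<Longrightarrow> 0 \<le> (\<Sum>j<Suc k. d j)"
    and DN: "(\<Sum>j<N. d j) = 0"
  shows "0 \<le> (\<Sum>k<N. a k * d k)"
proof -
  have "0 \<le> (\<Sum>k<N. (a k - a (Suc k)) * (\<Sum>j<Suc k. d j))"
  proof (rule sum_nonneg)
    fix k assume "k \<in> {..<N}"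
    then have "Suc k < N \<or> Suc k = N" by auto
    then show "0 \<le> (a k - a (Suc k)) * (\<Sum>j<Suc k. d j)"
    proof
      assume "Suc k < N" then show ?thesis using mono D by simp
    next
      assume "Suc k = N" then show ?thesis using DN by simp
    qed
  qed
  then show ?thesis unfolding abel_id2[where N=N and a=a and d=d] using DN by simp
qed

lemma hlp:
  fixes u x :: "real^'n::{finite,linorder}"
  assumes s: "sortedv u" and mj: "majorizes u x"
  shows "x \<in> convex hull {(\<chi> i. u $ \<sigma> i) | \<sigma>. \<sigma> permutes (UNIV::'n set)}"
proof (rule ccontr)
  let ?P = "{(\<chi> i. u $ \<sigma> i) | \<sigma>. \<sigma> permutes (UNIV::'n set)}"
  assume nx: "x \<notin> convex hull ?P"
  have "?P = (\<lambda>\<sigma>. (\<chi> i. u $ \<sigma> i)) ` {\<sigma>. \<sigma> permutes (UNIV::'n set)}" by auto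
  then have fP: "finite ?P" using finite_permutations[of "UNIV::'n set"] by simp
  have "compact (convex hull ?P)" by (rule compact_convex_hull[OF finite_imp_compact[OF fP]])
  then have cl: "closed (convex hull ?P)" by (rule compact_imp_closed)
  obtain a0 c where ac: "inner a0 x < c" "\<forall>y\<in>convex hull ?P. c < inner a0 y"
    using separating_hyperplane_closed_point[OF convex_convex_hull cl nx] by blast
  define w where "w = - a0"
  obtain \<pi> where p: "bij_betw \<pi> {..<CARD('n)} (UNIV::'n set)" "\<forall>k<CARD('n). dsorted w ! k = w $ \<pi> k"
    using dsorted_rep by blast
  define \<sigma> :: "'n \<Rightarrow> 'n" where "\<sigma> i = eidx (inv_into {..<CARD('n)} \<pi> i)" for i :: 'n
  have bi: "bij_betw (inv_into {..<CARD('n)} \<pi>) UNIV {..<CARD('n)}" using bij_betw_inv_into[OF p(1)] .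
  have bs: "bij_betw \<sigma> UNIV UNIV" unfolding \<sigma>_def[abs_def]
    using bij_betw_trans[OF bi bij_eidx] by (simp add: comp_def)
  have sp: "\<sigma> permutes UNIV" by (rule bij_imp_permutes[OF bs]) auto
  have inj: "inj_on \<pi> {..<CARD('n)}" using p(1) by (simp add: bij_betw_def)
  have sk: "\<sigma> (\<pi> k) = eidx k" if "k < CARD('n)" for k
    unfolding \<sigma>_def using inv_into_f_f[OF inj] that by simp
  define pp where "pp = (\<chi> i. u $ \<sigma> i)"
  have ppP: "pp \<in> convex hull ?P" unfolding pp_def using sp by (intro hull_inc) blast
  have wpp: "inner w pp = (\<Sum>k<CARD('n). w $ \<pi> k * u $ eidx k)"
  proof -
    have "inner w pp = (\<Sum>i\<in>UNIV. w $ i * pp $ i)" by (simp add: inner_vec_def)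
    also have "\<dots> = (\<Sum>k<CARD('n). w $ \<pi> k * pp $ \<pi> k)"
      by (subst sum.reindex_bij_betw[OF p(1), symmetric]) (rule refl)
    also have "\<dots> = (\<Sum>k<CARD('n). w $ \<pi> k * u $ eidx k)"
      by (rule sum.cong) (auto simp: pp_def sk)
    finally show ?thesis .
  qed
  have wx: "inner w x = (\<Sum>k<CARD('n). w $ \<pi> k * x $ \<pi> k)"
  proof -
    have "inner w x = (\<Sum>i\<in>UNIV. w $ i * x $ i)" by (simp add: inner_vec_def)
    also have "\<dots> = (\<Sum>k<CARD('n). w $ \<pi> k * x $ \<pi> k)"
      by (subst sum.reindex_bij_betw[OF p(1), symmetric]) (rule refl)
    finally show ?thesis .
  qed
  define d where "d k = u $ eidx k - x $ \<pi> k" for k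
  have Dm: "(\<Sum>j<m. d j) = Tj u m - (\<Sum>i\<in>\<pi> ` {..<m}. x $ i)" if "m \<le> CARD('n)" for m
  proof -
    have "inj_on \<pi> {..<m}" using inj that inj_on_subset by fastforce
    then have "(\<Sum>i\<in>\<pi> ` {..<m}. x $ i) = (\<Sum>k<m. x $ \<pi> k)" by (simp add: sum.reindex)
    then show ?thesis unfolding d_def using Tj_sortedv[OF s that] by (simp add: sum_subtractf)
  qed
  have cardm: "card (\<pi> ` {..<m}) = m" if "m \<le> CARD('n)" for m
  proof -
    have "inj_on \<pi> {..<m}" using inj that inj_on_subset by fastforce
    then show ?thesis by (simp add: card_image)
  qed
  have mjT: "\<forall>j. 1 \<le> j \<and> j < CARD('n) \<longrightarrow> Tj x j \<le> Tj u j" "Tj u CARD('n) = Tj x CARD('n)"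
    using mj unfolding majorizes_iff by auto
  have "0 \<le> (\<Sum>k<CARD('n). w $ \<pi> k * d k)"
  proof (rule abel_nonneg)
    fix k assume k: "Suc k < CARD('n)"
    show "w $ \<pi> (Suc k) \<le> w $ \<pi> k" using p(2) dsorted_mono[of k "Suc k" w] k by simp
    have "(\<Sum>i\<in>\<pi> ` {..<Suc k}. x $ i) \<le> Tj x (Suc k)" by (rule Tj_K[OF cardm]) (use k in simp)
    then show "0 \<le> (\<Sum>j<Suc k. d j)" using Dm[of "Suc k"] k mjT(1)[rule_format, of "Suc k"] by simp
  next
    have "\<pi> ` {..<CARD('n)} = UNIV" using p(1) by (simp add: bij_betw_def)
    then show "(\<Sum>j<CARD('n). d j) = 0" using Dm[of "CARD('n)"] mjT(2) Tj_total[of x] by simp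
  qed
  then have "inner w x \<le> inner w pp" unfolding wpp wx d_def
    by (simp add: algebra_simps sum_subtractf)
  then have "inner a0 pp \<le> inner a0 x" unfolding w_def by simp
  then show False using ac ppP by fastforce
qed



lemma convex_box: "convex (box_ab a b :: (real^'n) set)"
  unfolding box_cbox by (rule convex_box)

lemma pcol_box: "a < b \<Longrightarrow> pcol a b k \<in> box_ab a b"
  unfolding box_ab_def pcol_def by auto

lemma pv_box: "x \<in> box_ab a b \<Longrightarrow> (\<chi> i. x $ \<sigma> i) \<in> box_ab a b"
  unfolding box_ab_def by auto

lemma upper:
  fixes u x :: "real^'n::{finite,linorder}"
  assumes ab: "a < b" and pi: "perm_invariant_on (box_ab a b) phi"
    and cg: "convex_on (box_ab a b) g" and gle: "\<forall>y\<in>box_ab a b. g y \<le> phi y"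
    and s: "sortedv u" and ub: "u \<in> box_ab a b" and mj: "majorizes u x"
  shows "g x \<le> fpw a b phi u"
proof -
  let ?P = "{(\<chi> i. u $ \<sigma> i) | \<sigma>. \<sigma> permutes (UNIV::'n set)}"
  have Pb: "?P \<subseteq> box_ab a b" using pv_box[OF ub] by blast
  have hb: "convex hull ?P \<subseteq> box_ab a b" using Pb convex_box[of a b] by (rule hull_minimal)
  have cgh: "convex_on (convex hull ?P) g" by (rule convex_on_subset[OF cg hb convex_convex_hull])
  have bound: "g p \<le> fpw a b phi u" if "p \<in> ?P" for p
  proof -
    obtain \<sigma> where sg: "\<sigma> permutes (UNIV::'n set)" "p = (\<chi> i. u $ \<sigma> i)" using \<open>p \<in> ?P\<close> by blast
    let ?mu = "muv a b u"
    let ?y = "\<lambda>k. (\<chi> i. pcol a b k $ \<sigma> i)"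
    have dec: "p = (\<Sum>k\<le>CARD('n). ?mu k *\<^sub>R ?y k)"
    proof (subst vec_eq_iff, intro allI)
      fix j
      have "p $ j = u $ \<sigma> j" using sg by simp
      also have "\<dots> = (\<Sum>k\<le>CARD('n). ?mu k *\<^sub>R pcol a b k) $ \<sigma> j"
        using muv_decomp[OF ab, of u] by simp
      finally show "p $ j = (\<Sum>k\<le>CARD('n). ?mu k *\<^sub>R ?y k) $ j" by simp
    qed
    have "g p \<le> (\<Sum>k\<le>CARD('n). ?mu k * g (?y k))"
      unfolding dec
    proof (rule convex_on_sum[OF _ _ cg])
      show "(\<Sum>k\<le>CARD('n). ?mu k) = 1" by (rule muv_sum)
      show "\<And>i. i \<in> {..CARD('n)} \<Longrightarrow> 0 \<le> ?mu i" using muv_nonneg[OF ab s ub] by simp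
      show "\<And>i. i \<in> {..CARD('n)} \<Longrightarrow> ?y i \<in> box_ab a b" using pv_box[OF pcol_box[OF ab]] by blast
    qed auto
    also have "\<dots> \<le> (\<Sum>k\<le>CARD('n). ?mu k * phi (pcol a b k))"
    proof (rule sum_mono)
      fix k assume k: "k \<in> {..CARD('n)}"
      have "g (?y k) \<le> phi (?y k)" using gle pv_box[OF pcol_box[OF ab]] by blast
      also have "phi (?y k) = phi (pcol a b k)"
        using pi sg(1) pcol_box[OF ab] unfolding perm_invariant_on_def by blast
      finally show "?mu k * g (?y k) \<le> ?mu k * phi (pcol a b k)"
        using muv_nonneg[OF ab s ub, of k] k by (simp add: mult_left_mono)
    qed
    also have "\<dots> = fpw a b phi u" by (rule muv_fpw[OF ab, symmetric])
    finally show ?thesis .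
  qed
  have "x \<in> convex hull ?P" by (rule hlp[OF s mj])
  then show ?thesis using convex_on_convex_hull_bound[OF cgh] bound by blast
qed



definition Fset :: "real \<Rightarrow> real \<Rightarrow> real^'n::{finite,linorder} \<Rightarrow> (real,'n) vec set" where
  "Fset a b y = {u. majorizes u y \<and> sortedv u \<and> u \<in> box_ab a b}"

lemma Fset_alt: fixes y :: "real^'n::{finite,linorder}"
  shows "Fset a b y = box_ab a b \<inter> {u. (\<forall>i k. i \<le> k \<longrightarrow> u $ k \<le> u $ i) \<and>
    (\<forall>j. 1 \<le> j \<and> j < CARD('n) \<longrightarrow> Tj y j \<le> (\<Sum>k<j. u $ eidx k)) \<and>
    (\<Sum>k<CARD('n). u $ eidx k) = Tj y CARD('n)}" (is "_ = _ \<inter> {u. ?S u \<and> ?M u}")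
proof -
  have iff: "sortedv u \<Longrightarrow> majorizes u y \<longleftrightarrow> ?M u" for u
    unfolding majorizes_iff using Tj_sortedv[of u] by auto
  show ?thesis
  proof (intro set_eqI iffI)
    fix u assume "u \<in> Fset a b y"
    then have h: "majorizes u y" "sortedv u" "u \<in> box_ab a b" unfolding Fset_def by auto
    have "?S u" using h(2) unfolding sortedv_def .
    moreover have "?M u" using iff[OF h(2)] h(1) by simp
    ultimately show "u \<in> box_ab a b \<inter> {u. ?S u \<and> ?M u}" using h(3) by simp
  next
    fix u assume "u \<in> box_ab a b \<inter> {u. ?S u \<and> ?M u}"
    then have h: "u \<in> box_ab a b" "?S u" "?M u" by auto
    have s: "sortedv u" using h(2) unfolding sortedv_def .
    then have "majorizes u y" using iff[OF s] h(3) by simp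
    then show "u \<in> Fset a b y" unfolding Fset_def using s h(1) by simp
  qed
qed

lemma closed_imp_const: "closed {x. Q x} \<Longrightarrow> closed {x. P \<longrightarrow> Q x}"
  by (cases P) auto

lemma Fset_compact: fixes y :: "real^'n::{finite,linorder}" shows "compact (Fset a b y)"
proof -
  have c1: "compact (box_ab a b :: (real,'n) vec set)" unfolding box_cbox by (rule compact_cbox)
  have c2: "closed {u :: (real,'n) vec. (\<forall>i k. i \<le> k \<longrightarrow> u $ k \<le> u $ i) \<and>
    (\<forall>j. 1 \<le> j \<and> j < CARD('n) \<longrightarrow> Tj y j \<le> (\<Sum>k<j. u $ eidx k)) \<and>
    (\<Sum>k<CARD('n). u $ eidx k) = Tj y CARD('n)}"
    by (intro closed_Collect_conj closed_Collect_all closed_imp_const closed_Collect_le closed_Collect_eq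
        continuous_intros)
  show ?thesis unfolding Fset_alt by (rule compact_Int_closed[OF c1 c2])
qed

definition rsort :: "real^'n::{finite,linorder} \<Rightarrow> (real,'n) vec" where
  "rsort y = (\<chi> i. dsorted y ! (rank i - 1))"

lemma rsort_eidx: "k < CARD('n) \<Longrightarrow> rsort y $ (eidx k :: 'n::{finite,linorder}) = dsorted y ! k"
  unfolding rsort_def by (simp add: rank_eidx)

lemma rsort_sorted: "sortedv (rsort (y::real^'n::{finite,linorder}))"
  unfolding sortedv_def
proof (intro allI impI)
  fix i k :: 'n assume ik: "i \<le> k"
  obtain p where p: "p < CARD('n)" "i = eidx p" using eidx_surj by blast
  obtain q where q: "q < CARD('n)" "k = eidx q" using eidx_surj by blast
  have "p \<le> q" using ik p q eidx_le_iff by blast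
  then show "rsort y $ k \<le> rsort y $ i" using p q by (simp add: rsort_eidx dsorted_mono)
qed

lemma dsorted_rsort: "dsorted (rsort (y::real^'n::{finite,linorder})) = dsorted y"
  unfolding dsorted_sortedv[OF rsort_sorted]
  by (rule nth_equalityI) (auto simp: dsorted_len rsort_eidx)

lemma rsort_F: assumes "y \<in> box_ab a b" shows "rsort (y::real^'n::{finite,linorder}) \<in> Fset a b y"
proof -
  obtain \<pi> where p: "bij_betw \<pi> {..<CARD('n)} (UNIV::'n set)" "\<forall>k<CARD('n). dsorted y ! k = y $ \<pi> k"
    using dsorted_rep by blast
  have "rsort y \<in> box_ab a b" unfolding box_ab_def
  proof (safe)
    fix i :: 'n
    obtain k where k: "k < CARD('n)" "i = eidx k" using eidx_surj by blast
    have "rsort y $ i = y $ \<pi> k" using k p(2) by (simp add: rsort_eidx)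
    then show "a \<le> rsort y $ i" "rsort y $ i \<le> b" using assms unfolding box_ab_def by auto
  qed
  then show ?thesis by (simp add: Fset_def majorizes_def dsorted_rsort rsort_sorted)
qed

lemma fpw_cont: "a < b \<Longrightarrow> continuous_on S (fpw a b phi :: real^'n::{finite,linorder} \<Rightarrow> real)"
  unfolding fpw_def[abs_def] by (intro continuous_intros) auto

lemma minimizer: assumes "a < b" "y \<in> box_ab a b"
  shows "\<exists>u\<in>Fset a b (y::real^'n::{finite,linorder}). \<forall>v\<in>Fset a b y. fpw a b phi u \<le> fpw a b phi v"
  using continuous_attains_inf[OF Fset_compact _ fpw_cont[OF assms(1)]] rsort_F[OF assms(2)] by blast



definition mm :: "real \<Rightarrow> real \<Rightarrow> ((real,'n::{finite,linorder}) vec \<Rightarrow> real) \<Rightarrow> (real,'n) vec \<Rightarrow> (real,'n) vec" where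
  "mm a b phi y = (SOME u. u \<in> Fset a b y \<and> (\<forall>v\<in>Fset a b y. fpw a b phi u \<le> fpw a b phi v))"

lemma mm_spec: assumes "a < b" "y \<in> box_ab a b"
  shows "mm a b phi y \<in> Fset a b y \<and> (\<forall>v\<in>Fset a b y. fpw a b phi (mm a b phi y) \<le> fpw a b phi v)"
  unfolding mm_def by (rule someI_ex) (use minimizer[OF assms, of phi] in blast)

lemma Tj_sub: fixes x y :: "real^'n::{finite,linorder}"
  assumes t: "0 \<le> t" "t \<le> 1" and j: "j \<le> CARD('n)"
  shows "Tj ((1 - t) *\<^sub>R x + t *\<^sub>R y) j \<le> (1 - t) * Tj x j + t * Tj y j"
proof -
  obtain \<pi> where p: "bij_betw \<pi> {..<CARD('n)} (UNIV::'n set)" "\<forall>k<CARD('n). dsorted ((1 - t) *\<^sub>R x + t *\<^sub>R y) ! k = ((1 - t) *\<^sub>R x + t *\<^sub>R y) $ \<pi> k"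
    using dsorted_rep by blast
  have inj: "inj_on \<pi> {..<j}" using p(1) j unfolding bij_betw_def by (meson inj_on_subset lessThan_subset_iff)
  have c: "card (\<pi> ` {..<j}) = j" using inj by (simp add: card_image)
  have sx: "(\<Sum>k<j. w $ \<pi> k) \<le> Tj w j" for w :: "(real,'n) vec"
  proof -
    have "(\<Sum>k<j. w $ \<pi> k) = (\<Sum>i\<in>\<pi> ` {..<j}. w $ i)" using inj by (simp add: sum.reindex)
    also have "\<dots> \<le> Tj w j" by (rule Tj_K[OF c])
    finally show ?thesis .
  qed
  have "Tj ((1 - t) *\<^sub>R x + t *\<^sub>R y) j = (1 - t) * (\<Sum>k<j. x $ \<pi> k) + t * (\<Sum>k<j. y $ \<pi> k)"
    using Tj_rep[OF p(2) j] by (simp add: sum.distrib sum_distrib_left)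
  also have "\<dots> \<le> (1 - t) * Tj x j + t * Tj y j"
    using sx[of x] sx[of y] t by (intro add_mono mult_left_mono) auto
  finally show ?thesis .
qed

lemma gg_convex: assumes ab: "a < b"
  shows "convex_on (box_ab a b) (\<lambda>y::real^'n::{finite,linorder}. fpw a b phi (mm a b phi y))"
proof (rule convex_onI[OF _ convex_box])
  fix t :: real and x y :: "(real,'n) vec"
  assume t: "0 < t" "t < 1" and xy: "x \<in> box_ab a b" "y \<in> box_ab a b"
  define z where "z = (1 - t) *\<^sub>R x + t *\<^sub>R y"
  have zb: "z \<in> box_ab a b" unfolding z_def using convexD[OF convex_box xy] t by simp
  define u1 where "u1 = mm a b phi x"
  define u2 where "u2 = mm a b phi y"
  have F1: "u1 \<in> Fset a b x" using mm_spec[OF ab xy(1)] unfolding u1_def by blast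
  have F2: "u2 \<in> Fset a b y" using mm_spec[OF ab xy(2)] unfolding u2_def by blast
  define u where "u = (1 - t) *\<^sub>R u1 + t *\<^sub>R u2"
  have h1: "majorizes u1 x" "sortedv u1" "u1 \<in> box_ab a b" using F1 unfolding Fset_def by auto
  have h2: "majorizes u2 y" "sortedv u2" "u2 \<in> box_ab a b" using F2 unfolding Fset_def by auto
  have ub: "u \<in> box_ab a b" unfolding u_def using convexD[OF convex_box h1(3) h2(3)] t by simp
  have us: "sortedv u" unfolding sortedv_def
  proof (intro allI impI)
    fix i k :: 'n assume "i \<le> k"
    then have "u1 $ k \<le> u1 $ i" "u2 $ k \<le> u2 $ i" using h1(2) h2(2) unfolding sortedv_def by auto
    then show "u $ k \<le> u $ i" unfolding u_def using t by (simp add: add_mono mult_left_mono)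
  qed
  have Tu: "Tj u j = (1 - t) * Tj u1 j + t * Tj u2 j" if "j \<le> CARD('n)" for j
    using Tj_sortedv[OF us that] Tj_sortedv[OF h1(2) that] Tj_sortedv[OF h2(2) that]
    unfolding u_def by (simp add: sum.distrib sum_distrib_left)
  have m1: "\<forall>j. 1 \<le> j \<and> j < CARD('n) \<longrightarrow> Tj x j \<le> Tj u1 j" "Tj u1 CARD('n) = Tj x CARD('n)"
    using h1(1) unfolding majorizes_iff by auto
  have m2: "\<forall>j. 1 \<le> j \<and> j < CARD('n) \<longrightarrow> Tj y j \<le> Tj u2 j" "Tj u2 CARD('n) = Tj y CARD('n)"
    using h2(1) unfolding majorizes_iff by auto
  have "majorizes u z" unfolding majorizes_iff
  proof (intro conjI allI impI)
    fix j assume j: "1 \<le> j \<and> j < CARD('n)"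
    have "Tj z j \<le> (1 - t) * Tj x j + t * Tj y j" unfolding z_def by (rule Tj_sub) (use t j in auto)
    also have "\<dots> \<le> (1 - t) * Tj u1 j + t * Tj u2 j"
      using m1(1) m2(1) j t by (intro add_mono mult_left_mono) auto
    also have "\<dots> = Tj u j" using Tu j by simp
    finally show "Tj z j \<le> Tj u j" .
  next
    have "Tj z CARD('n) = (1 - t) * Tj x CARD('n) + t * Tj y CARD('n)"
      unfolding z_def Tj_total by (simp add: sum.distrib sum_distrib_left)
    then show "Tj u CARD('n) = Tj z CARD('n)" using Tu[of "CARD('n)"] m1(2) m2(2) by simp
  qed
  then have uF: "u \<in> Fset a b z" unfolding Fset_def using us ub by simp
  have "fpw a b phi (mm a b phi z) \<le> fpw a b phi u" using mm_spec[OF ab zb] uF by blast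
  also have "\<dots> = (1 - t) * fpw a b phi u1 + t * fpw a b phi u2" unfolding u_def by (rule fpw_affine)
  finally show "fpw a b phi (mm a b phi ((1 - t) *\<^sub>R x + t *\<^sub>R y))
      \<le> (1 - t) * fpw a b phi (mm a b phi x) + t * fpw a b phi (mm a b phi y)"
    unfolding z_def u1_def u2_def .
qed

lemma down_closed: fixes D :: "nat set"
  assumes "finite D" "\<And>m m'. m \<in> D \<Longrightarrow> m' \<le> m \<Longrightarrow> m' \<in> D"
  shows "D = {..<card D}"
proof (cases "D = {}")
  case True then show ?thesis by simp
next
  case False
  have "D = {..Max D}"
    using assms Max_ge Max_in[OF assms(1) False] by auto
  then show ?thesis by (metis card_atMost lessThan_Suc_atMost)
qed

lemma fpw_pcol: assumes "K \<le> CARD('n)" and ab: "a < b"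
  shows "fpw a b phi (pcol a b K :: real^'n::{finite,linorder}) = phi (pcol a b K)"
proof -
  have "(\<Sum>m<CARD('n). ((pcol a b K :: (real,'n) vec) $ eidx m - a) / (b - a) * (phi (pcol a b (Suc m)) - phi (pcol a b m)))
      = (\<Sum>m<CARD('n). if m \<in> {..<K} then phi (pcol a b (Suc m)) - phi (pcol a b m) else 0)"
    by (rule sum.cong) (use ab in \<open>auto simp: pcol_eidx\<close>)
  also have "\<dots> = (\<Sum>m<K. phi (pcol a b (Suc m)) - phi (pcol a b m))"
  proof -
    have "{..<CARD('n)} \<inter> {..<K} = {..<K}" using assms by auto
    then show ?thesis by (simp only: sum.inter_restrict[OF finite_lessThan, symmetric])
  qed
  also have "\<dots> = phi (pcol a b K) - phi (pcol a b 0)" by (rule sum_lessThan_telescope)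
  finally show ?thesis unfolding fpw_reindex by simp
qed

lemma rank_bij: "bij_betw (\<lambda>i::'n::{finite,linorder}. rank i - 1) UNIV {..<CARD('n)}"
proof -
  have inj: "inj_on (eidx::nat\<Rightarrow>'n) {..<CARD('n)}" using bij_eidx unfolding bij_betw_def by blast
  have "(\<lambda>i::'n. rank i - 1) = inv_into {..<CARD('n)} eidx"
  proof
    fix i :: 'n
    obtain k where k: "k < CARD('n)" "i = eidx k" using eidx_surj by blast
    then show "rank i - 1 = inv_into {..<CARD('n)} eidx i" using inv_into_f_f[OF inj] by (simp add: rank_eidx)
  qed
  then show ?thesis using bij_betw_inv_into[OF bij_eidx] by simp
qed

lemma vertex_bound:
  fixes v :: "real^'n::{finite,linorder}"
  assumes ab: "a < b" and pi: "perm_invariant_on (box_ab a b) phi"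
    and vb: "v \<in> box_ab a b" and vv: "v \<in> vert_ab a b"
  shows "fpw a b phi (mm a b phi v) \<le> phi v"
proof -
  obtain \<pi> where p: "bij_betw \<pi> {..<CARD('n)} (UNIV::'n set)" "\<forall>k<CARD('n). dsorted v ! k = v $ \<pi> k"
    using dsorted_rep by blast
  define w where "w = rsort v"
  have le: "fpw a b phi (mm a b phi v) \<le> fpw a b phi w" using mm_spec[OF ab vb] rsort_F[OF vb] unfolding w_def by blast
  define \<sigma> :: "'n \<Rightarrow> 'n" where "\<sigma> i = \<pi> (rank i - 1)" for i
  have rl: "rank i - 1 < CARD('n)" for i :: 'n using rank_bij unfolding bij_betw_def by blast
  have wsig: "w = (\<chi> i. v $ \<sigma> i)"
    unfolding w_def rsort_def \<sigma>_def using p(2) rl by (simp add: vec_eq_iff)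
  have bs: "bij_betw \<sigma> UNIV UNIV" unfolding \<sigma>_def[abs_def]
    using bij_betw_trans[OF rank_bij p(1)] by (simp add: comp_def)
  have sp: "\<sigma> permutes UNIV" by (rule bij_imp_permutes[OF bs]) auto
  have phiw: "phi w = phi v" using pi sp vb unfolding wsig perm_invariant_on_def by blast
  \<comment> \<open>w is a sorted vertex, hence a column\<close>
  have wvals: "w $ i = a \<or> w $ i = b" "a \<le> w $ i" "w $ i \<le> b" for i
    using vv vb unfolding wsig vert_ab_def box_ab_def by auto
  have ws: "sortedv w" unfolding w_def by (rule rsort_sorted)
  define D where "D = {m. m < CARD('n) \<and> w $ eidx m = b}"
  have Ddown: "m' \<in> D" if "m \<in> D" "m' \<le> m" for m m'
  proof -
    have "eidx m' \<le> (eidx m :: 'n)" using that unfolding D_def by (simp add: eidx_le_iff)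
    then have "w $ eidx m \<le> w $ eidx m'" using ws unfolding sortedv_def by blast
    then show ?thesis using that wvals[of "eidx m'"] unfolding D_def by auto
  qed
  have Dfin: "finite D" unfolding D_def by simp
  have Deq: "D = {..<card D}" by (rule down_closed[OF Dfin Ddown])
  define K where "K = card D"
  have KN: "K \<le> CARD('n)" unfolding K_def D_def
    by (metis (no_types, lifting) card_lessThan card_mono finite_lessThan mem_Collect_eq subsetI lessThan_iff)
  have wK: "w = pcol a b K"
  proof (subst vec_eq_iff, intro allI)
    fix i :: 'n
    obtain m where m: "m < CARD('n)" "i = eidx m" using eidx_surj by blast
    have "m \<in> D \<longleftrightarrow> m < K" using Deq unfolding K_def by auto
    then have "w $ eidx m = (if m < K then b else a)" using wvals[of "eidx m"] m ab unfolding D_def by auto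
    then show "w $ i = pcol a b K $ i" using m by (simp add: pcol_eidx not_le)
  qed
  have "fpw a b phi w = phi w" unfolding wK by (rule fpw_pcol[OF KN ab])
  then show ?thesis using le phiw by simp
qed



theorem mainTheorem16:
  fixes a b :: real and phi :: "real^'n::{finite,linorder} \<Rightarrow> real"
  assumes "a < b"
    and "perm_invariant_on (box_ab a b) phi"
    and "\<forall>x\<in>box_ab a b. conv_env (box_ab a b) (\<lambda>y. ereal (phi y)) x
           = conv_env (box_ab a b) (\<lambda>y. if y \<in> vert_ab a b then ereal (phi y) else \<infinity>) x"
    and "x \<in> box_ab a b"
  shows "\<exists>u. (majorizes u x \<and> (\<forall>i k. i \<le> k \<longrightarrow> u $ k \<le> u $ i) \<and> (\<forall>i. a \<le> u $ i \<and> u $ i \<le> b))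
           \<and> (\<forall>v. majorizes v x \<and> (\<forall>i k. i \<le> k \<longrightarrow> v $ k \<le> v $ i) \<and> (\<forall>i. a \<le> v $ i \<and> v $ i \<le> b)
                  \<longrightarrow> fpw a b phi u \<le> fpw a b phi v)
           \<and> conv_env (box_ab a b) (\<lambda>y. ereal (phi y)) x = ereal (fpw a b phi u)"
proof -
  define u where "u = mm a b phi x"
  have uF: "u \<in> Fset a b x" and umin: "\<forall>v\<in>Fset a b x. fpw a b phi u \<le> fpw a b phi v"
    using mm_spec[OF assms(1) assms(4)] unfolding u_def by auto
  have h: "majorizes u x" "sortedv u" "u \<in> box_ab a b" using uF unfolding Fset_def by auto
  have up: "conv_env (box_ab a b) (\<lambda>y. ereal (phi y)) x \<le> ereal (fpw a b phi u)"
    unfolding conv_env_def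
  proof (rule SUP_least)
    fix g assume "g \<in> {g. convex_on (box_ab a b) g \<and> (\<forall>y\<in>box_ab a b. ereal (g y) \<le> ereal (phi y))}"
    then have g: "convex_on (box_ab a b) g" "\<forall>y\<in>box_ab a b. g y \<le> phi y" by auto
    show "ereal (g x) \<le> ereal (fpw a b phi u)"
      using upper[OF assms(1,2) g h(2) h(3) h(1)] by simp
  qed
  let ?g = "\<lambda>y. fpw a b phi (mm a b phi y)"
  have gin: "?g \<in> {g. convex_on (box_ab a b) g \<and>
      (\<forall>y\<in>box_ab a b. ereal (g y) \<le> (if y \<in> vert_ab a b then ereal (phi y) else \<infinity>))}"
  proof (intro CollectI conjI ballI)
    show "convex_on (box_ab a b) ?g" by (rule gg_convex[OF assms(1)])
    fix y :: "(real,'n) vec" assume yb: "y \<in> box_ab a b"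
    show "ereal (?g y) \<le> (if y \<in> vert_ab a b then ereal (phi y) else \<infinity>)"
    proof (cases "y \<in> vert_ab a b")
      case True
      then show ?thesis using vertex_bound[OF assms(1,2) yb True] by simp
    qed simp
  qed
  have low: "ereal (fpw a b phi u) \<le> conv_env (box_ab a b) (\<lambda>y. if y \<in> vert_ab a b then ereal (phi y) else \<infinity>) x"
    unfolding conv_env_def u_def by (rule SUP_upper[OF gin])
  have eq: "conv_env (box_ab a b) (\<lambda>y. ereal (phi y)) x = ereal (fpw a b phi u)"
  proof -
    have "conv_env (box_ab a b) (\<lambda>y. ereal (phi y)) x = conv_env (box_ab a b) (\<lambda>y. if y \<in> vert_ab a b then ereal (phi y) else \<infinity>) x"
      using assms(3) assms(4) by (rule bspec)
    then show ?thesis using up low by (simp add: order_antisym)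
  qed
  show ?thesis
  proof (intro exI[of _ u] conjI allI impI)
    show "majorizes u x" by (rule h(1))
    show "\<And>i k. i \<le> k \<Longrightarrow> u $ k \<le> u $ i" using h(2) unfolding sortedv_def by blast
    show "\<And>i. a \<le> u $ i" "\<And>i. u $ i \<le> b" using h(3) unfolding box_ab_def by auto
    fix v assume "majorizes v x \<and> (\<forall>i k. i \<le> k \<longrightarrow> v $ k \<le> v $ i) \<and> (\<forall>i. a \<le> v $ i \<and> v $ i \<le> b)"
    then have "v \<in> Fset a b x" unfolding Fset_def sortedv_def box_ab_def by auto
    then show "fpw a b phi u \<le> fpw a b phi v" using umin by blast
  next
    show "conv_env (box_ab a b) (\<lambda>y. ereal (phi y)) x = ereal (fpw a b phi u)" by (rule eq)
  qed
qed

end
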